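(* Let $K\subset\mathbb{R}$ be a real quadratic field with nontrivial automorphism $x\mapsto x'$, let $L\subset K$ be a pseudolattice, and for $t\in\mathbb{R}$ let $\Lambda_t(L)=\{le^{t/2}+il'e^{-t/2}: l\in L\}\subset\mathbb{C}$. Equip $\mathbb{C}$ with the pairing $(x\cdot y)=\mathrm{Im}(xy)=x_0y_1+x_1y_0$ for $x=x_0+ix_1$, $y=y_0+iy_1$, and set $\Lambda_t(L)^!=\{\mu\in\mathbb{C}:(\lambda\cdot\mu)\in\mathbb{Z}\ \text{for all }\lambda\in\Lambda_t(L)\}$. Let $M=L^?=\{m\in K:\mathrm{tr}_{K/\mathbb{Q}}(l'm)\in\mathbb{Z}\ \text{for all } l\in L\}$. Then $$\Lambda_t(L)^!=\Lambda_t(M)=\{me^{t/2}+im'e^{-t/2}: m\in M\}.$$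
   Context: A pseudolattice $L\subset K$ is a subgroup of $K$ that is free abelian of rank 2 and spans $K$ over $\mathbb{Q}$. *)

theory Defs
  imports Complex_Main
begin

text \<open>The real quadratic field K = Q(sqrt d) inside the reals, for an integer d > 0
  that is not a perfect square (every real quadratic field has this form).\<close>
definition qfield :: "int \<Rightarrow> real set" where
  "qfield d = {of_rat a + of_rat b * sqrt (of_int d) | a b. True}"

definition qconj :: "int \<Rightarrow> real \<Rightarrow> real" where
  "qconj d x = (THE y. \<exists>a b. x = of_rat a + of_rat b * sqrt (of_int d)
                          \<and> y = of_rat a - of_rat b * sqrt (of_int d))"

definition qtrace :: "int \<Rightarrow> real \<Rightarrow> real" where
  "qtrace d x = x + qconj d x"

definition pseudolattice :: "int \<Rightarrow> real set \<Rightarrow> bool" where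
  "pseudolattice d L \<longleftrightarrow> (\<exists>a b.
      L = {of_int m * a + of_int n * b | m n. True}
    \<and> (\<forall>m n :: int. of_int m * a + of_int n * b = 0 \<longrightarrow> m = 0 \<and> n = 0)
    \<and> {of_rat q * a + of_rat r * b | q r. True} = qfield d)"

definition Lambda :: "int \<Rightarrow> real \<Rightarrow> real set \<Rightarrow> complex set" where
  "Lambda d t L = {Complex (l * exp (t/2)) (qconj d l * exp (- t/2)) | l. l \<in> L}"

definition cpair :: "complex \<Rightarrow> complex \<Rightarrow> real" where
  "cpair x y = Im (x * y)"

definition cdual :: "complex set \<Rightarrow> complex set" where
  "cdual S = {y. \<forall>x\<in>S. cpair x y \<in> \<int>}"

definition tdual :: "int \<Rightarrow> real set \<Rightarrow> real set" where
  "tdual d L = {m \<in> qfield d. \<forall>l\<in>L. qtrace d (qconj d l * m) \<in> \<int>}"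

end

theory Submission
  imports Defs
begin

locale qf =
  fixes d :: int
  assumes dpos: "d > 0" and irr: "sqrt (of_int d) \<notin> \<rat>"
begin

abbreviation "s \<equiv> sqrt (of_int d :: real)"

lemma ss: "s * s = of_int d"
  using dpos by simp

lemma rep_unique:
  assumes "of_rat a + of_rat b * s = of_rat c + of_rat e * s"
  shows "a = c \<and> b = e"
proof -
  have "b = e"
  proof (rule ccontr)
    assume ne: "b \<noteq> e"
    have "(of_rat b - of_rat e) * s = of_rat c - of_rat a" using assms by (simp add: algebra_simps)
    hence "s = of_rat ((c - a) / (b - e))" using ne by (simp add: of_rat_diff of_rat_divide field_simps)
    thus False using irr by (metis Rats_of_rat)
  qed
  thus ?thesis using assms by simp
qed

lemma K_E:
  assumes "x \<in> qfield d"
  obtains a b where "x = of_rat a + of_rat b * s"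
  using assms unfolding qfield_def by blast

lemma K_I: "of_rat a + of_rat b * s \<in> qfield d"
  unfolding qfield_def by blast

lemma conj_rep: "qconj d (of_rat a + of_rat b * s) = of_rat a - of_rat b * s"
  unfolding qconj_def
proof (rule the_equality)
  show "\<exists>a' b'. of_rat a + of_rat b * s = of_rat a' + of_rat b' * s \<and>
    of_rat a - of_rat b * s = of_rat a' - of_rat b' * s" by blast
next
  fix y assume "\<exists>a' b'. of_rat a + of_rat b * s = of_rat a' + of_rat b' * s \<and> y = of_rat a' - of_rat b' * s"
  then obtain a' b' where "of_rat a + of_rat b * s = of_rat a' + of_rat b' * s" "y = of_rat a' - of_rat b' * s" by blast
  with rep_unique show "y = of_rat a - of_rat b * s" by blast
qed

lemma conj_rep': "qconj d (of_rat a + of_rat b * s) = of_rat a + of_rat (- b) * s"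
  using conj_rep by (simp add: of_rat_minus)

lemma K_add: "x \<in> qfield d \<Longrightarrow> y \<in> qfield d \<Longrightarrow> x + y \<in> qfield d
   \<and> qconj d (x + y) = qconj d x + qconj d y"
proof -
  assume "x \<in> qfield d" "y \<in> qfield d"
  then obtain a b c e where x: "x = of_rat a + of_rat b * s" and y: "y = of_rat c + of_rat e * s"
    by (meson K_E)
  have e: "x + y = of_rat (a + c) + of_rat (b + e) * s" using x y by (simp add: of_rat_add algebra_simps)
  have c1: "qconj d (x + y) = of_rat (a + c) - of_rat (b + e) * s" unfolding e by (rule conj_rep)
  have c2: "qconj d x = of_rat a - of_rat b * s" unfolding x by (rule conj_rep)
  have c3: "qconj d y = of_rat c - of_rat e * s" unfolding y by (rule conj_rep)
  have "qconj d (x + y) = qconj d x + qconj d y" unfolding c1 c2 c3 by (simp add: of_rat_add algebra_simps)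
  thus ?thesis using e K_I by metis
qed

lemma K_neg: "x \<in> qfield d \<Longrightarrow> - x \<in> qfield d \<and> qconj d (- x) = - qconj d x"
proof -
  assume "x \<in> qfield d"
  then obtain a b where x: "x = of_rat a + of_rat b * s" by (meson K_E)
  have e: "- x = of_rat (- a) + of_rat (- b) * s" using x by (simp add: of_rat_minus algebra_simps)
  have c1: "qconj d (- x) = of_rat (- a) - of_rat (- b) * s" unfolding e by (rule conj_rep)
  have c2: "qconj d x = of_rat a - of_rat b * s" unfolding x by (rule conj_rep)
  have "qconj d (- x) = - qconj d x" unfolding c1 c2 by (simp add: of_rat_minus algebra_simps)
  thus ?thesis using e K_I by metis
qed

lemma K_sub: "x \<in> qfield d \<Longrightarrow> y \<in> qfield d \<Longrightarrow> x - y \<in> qfield d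
   \<and> qconj d (x - y) = qconj d x - qconj d y"
  using K_add[of x "- y"] K_neg[of y] by simp

lemma K_mult: "x \<in> qfield d \<Longrightarrow> y \<in> qfield d \<Longrightarrow> x * y \<in> qfield d
   \<and> qconj d (x * y) = qconj d x * qconj d y"
proof -
  assume "x \<in> qfield d" "y \<in> qfield d"
  then obtain a b c e where x: "x = of_rat a + of_rat b * s" and y: "y = of_rat c + of_rat e * s"
    by (meson K_E)
  have "x * y = of_rat (a * c + b * e * of_int d) + of_rat (a * e + b * c) * s"
    using x y ss by (simp add: of_rat_add of_rat_mult algebra_simps; metis mult.assoc)
  moreover have "(of_rat a - of_rat b * s) * (of_rat c - of_rat e * s)
     = of_rat (a * c + b * e * of_int d) - of_rat (a * e + b * c) * (s::real)"
    using ss by (simp add: of_rat_add of_rat_mult algebra_simps; metis mult.assoc)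
  moreover have "qconj d x = of_rat a - of_rat b * s" unfolding x by (rule conj_rep)
  moreover have "qconj d y = of_rat c - of_rat e * s" unfolding y by (rule conj_rep)
  ultimately show ?thesis using K_I conj_rep by metis
qed

lemma K_rat: "of_rat q \<in> qfield d \<and> qconj d (of_rat q) = of_rat q"
  using K_I[of q 0] conj_rep[of q 0] by simp

lemma K_int: "of_int n \<in> qfield d \<and> qconj d (of_int n) = of_int n"
  using K_rat[of "of_int n"] by simp

lemma K_conj: "x \<in> qfield d \<Longrightarrow> qconj d x \<in> qfield d \<and> qconj d (qconj d x) = x"
proof -
  assume "x \<in> qfield d"
  then obtain a b where x: "x = of_rat a + of_rat b * s" by (meson K_E)
  have c: "qconj d x = of_rat a + of_rat (- b) * s" unfolding x by (rule conj_rep')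
  have "qconj d (qconj d x) = of_rat a - of_rat (- b) * s" unfolding c by (rule conj_rep)
  moreover have "qconj d x \<in> qfield d" unfolding c by (rule K_I)
  ultimately show ?thesis using x by (simp add: of_rat_minus)
qed

lemma conj_fix: "x \<in> qfield d \<Longrightarrow> qconj d x = x \<Longrightarrow> x \<in> \<rat>"
proof -
  assume "x \<in> qfield d" "qconj d x = x"
  then obtain a b where x: "x = of_rat a + of_rat b * s" and "of_rat a - of_rat b * s = x"
    by (metis K_E conj_rep)
  hence "of_rat b * s = 0" by simp
  moreover have "s \<noteq> 0" using irr by auto
  ultimately have "b = 0" by simp
  thus ?thesis using x by simp
qed

lemma conj_zero: "x \<in> qfield d \<Longrightarrow> qconj d x = 0 \<Longrightarrow> x = 0"
  using K_conj[of x] K_rat[of 0] by fastforce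

lemma K_inv: "x \<in> qfield d \<Longrightarrow> inverse x \<in> qfield d \<and> qconj d (inverse x) = inverse (qconj d x)"
proof -
  assume xK: "x \<in> qfield d"
  show ?thesis
  proof (cases "x = 0")
    case True thus ?thesis using K_rat[of 0] by simp
  next
    case False
    have cK: "qconj d x \<in> qfield d" using K_conj xK by blast
    have c0: "qconj d x \<noteq> 0" using conj_zero xK False by blast
    have pK: "x * qconj d x \<in> qfield d" using K_mult xK cK by blast
    have "qconj d (x * qconj d x) = x * qconj d x"
      using K_mult[OF xK cK] K_conj[OF xK] by (simp add: mult.commute)
    hence "x * qconj d x \<in> \<rat>" using conj_fix pK by blast
    then obtain r where r: "x * qconj d x = of_rat r" by (metis Rats_cases)
    have r0: "r \<noteq> 0" using r False c0 by auto
    have "x * (qconj d x * of_rat (inverse r)) = of_rat r * of_rat (inverse r)"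
      using r by (simp add: mult.assoc[symmetric])
    also have "\<dots> = 1" using r0 by (simp add: of_rat_mult[symmetric])
    finally have inv: "inverse x = qconj d x * of_rat (inverse r)"
      using False by (metis inverse_unique)
    have iK: "inverse x \<in> qfield d" using inv K_mult[OF cK] K_rat by simp
    have "qconj d x * qconj d (inverse x) = qconj d (x * inverse x)" using K_mult[OF xK iK] by simp
    also have "\<dots> = 1" using False K_rat[of 1] by simp
    finally have "qconj d (inverse x) = inverse (qconj d x)" using c0 by (simp add: field_simps)
    thus ?thesis using iK by simp
  qed
qed

lemma K_div: "x \<in> qfield d \<Longrightarrow> y \<in> qfield d \<Longrightarrow> x / y \<in> qfield d
   \<and> qconj d (x / y) = qconj d x / qconj d y"
  using K_mult[of x "inverse y"] K_inv[of y] by (simp add: divide_inverse)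

lemma pair_trace:
  assumes "l \<in> qfield d" "m \<in> qfield d"
  shows "cpair (Complex (l * exp (t/2)) (qconj d l * exp (- t/2)))
               (Complex (m * exp (t/2)) (qconj d m * exp (- t/2))) = qtrace d (qconj d l * m)"
proof -
  have ee: "exp (t/2) * exp (- t/2) = 1" by (simp add: exp_minus)
  have cl: "qconj d l \<in> qfield d" "qconj d (qconj d l) = l" using K_conj assms(1) by auto
  have "qtrace d (qconj d l * m) = qconj d l * m + l * qconj d m"
    unfolding qtrace_def using K_mult[OF cl(1) assms(2)] cl(2) by simp
  moreover have "cpair (Complex (l * exp (t/2)) (qconj d l * exp (- t/2)))
               (Complex (m * exp (t/2)) (qconj d m * exp (- t/2)))
     = l * qconj d m * (exp (t/2) * exp (- t/2)) + qconj d l * m * (exp (t/2) * exp (- t/2))"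
    unfolding cpair_def by (simp add: algebra_simps)
  ultimately show ?thesis using ee by simp
qed

end

theorem lemma4p8p1:
  fixes d :: int and L :: "real set" and t :: real
  assumes "d > 0" and "sqrt (of_int d) \<notin> \<rat>"
    and "pseudolattice d L"
  shows "cdual (Lambda d t L) = Lambda d t (tdual d L)"
proof -
  interpret qf d using assms(1,2) by unfold_locales
  obtain a b where Ldef: "L = {of_int m * a + of_int n * b | m n. True}"
    and ind: "\<forall>m n :: int. of_int m * a + of_int n * b = 0 \<longrightarrow> m = 0 \<and> n = 0"
    and span: "{of_rat q * a + of_rat r * b | q r. True} = qfield d"
    using assms(3) unfolding pseudolattice_def by blast
  have "of_rat 1 * a + of_rat 0 * b \<in> {of_rat q * a + of_rat r * b | q r. True}" by blast
  hence aK: "a \<in> qfield d" unfolding span by simp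
  have "of_rat 0 * a + of_rat 1 * b \<in> {of_rat q * a + of_rat r * b | q r. True}" by blast
  hence bK: "b \<in> qfield d" unfolding span by simp
  have LK: "L \<subseteq> qfield d"
  proof
    fix l assume "l \<in> L"
    then obtain i j :: int where l: "l = of_int i * a + of_int j * b" using Ldef by blast
    show "l \<in> qfield d" unfolding l using K_int K_mult K_add aK bK by metis
  qed
  have "of_int 1 * a + of_int 0 * b \<in> {of_int m * a + of_int n * b | m n. True}" by blast
  hence aL: "a \<in> L" unfolding Ldef by simp
  have "of_int 0 * a + of_int 1 * b \<in> {of_int m * a + of_int n * b | m n. True}" by blast
  hence bL: "b \<in> L" unfolding Ldef by simp
  define e where "e = exp (t/2)"
  define e' where "e' = exp (- t/2)"
  have ee: "e * e' = 1" unfolding e_def e'_def by (simp add: exp_minus)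
  have e0: "e \<noteq> 0" "e' \<noteq> 0" unfolding e_def e'_def by auto
  have a0: "a \<noteq> 0"
  proof
    assume "a = 0"
    hence "of_int 1 * a + of_int 0 * b = (0::real)" by simp
    thus False using ind[rule_format, of 1 0] by simp
  qed
  have a'0: "qconj d a \<noteq> 0" using conj_zero aK a0 by blast
  have D0: "a * qconj d b - qconj d a * b \<noteq> 0"
  proof
    assume D: "a * qconj d b - qconj d a * b = 0"
    define r where "r = b / a"
    have rK: "r \<in> qfield d" and rc: "qconj d r = qconj d b / qconj d a"
      unfolding r_def using K_div aK bK by auto
    have "qconj d b / qconj d a = b / a" using D a0 a'0 by (simp add: field_simps)
    hence "qconj d r = r" using rc by (simp add: r_def)
    hence "r \<in> \<rat>" using conj_fix rK by blast
    then obtain i j :: int where j: "j > 0" and rr: "r = of_int i / of_int j"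
      by (metis Rats_cases')
    have "of_int (- i) * a + of_int j * b = 0"
      using rr j a0 unfolding r_def by (simp add: field_simps)
    thus False using ind j by blast
  qed
  show ?thesis
  proof
    show "Lambda d t (tdual d L) \<subseteq> cdual (Lambda d t L)"
    proof
      fix y assume "y \<in> Lambda d t (tdual d L)"
      then obtain m where y: "y = Complex (m * exp (t/2)) (qconj d m * exp (- t/2))"
        and mK: "m \<in> qfield d" and mM: "\<forall>l\<in>L. qtrace d (qconj d l * m) \<in> \<int>"
        unfolding Lambda_def tdual_def by blast
      show "y \<in> cdual (Lambda d t L)"
        unfolding cdual_def Lambda_def
      proof (clarify)
        fix l assume "l \<in> L"
        thus "cpair (Complex (l * exp (t/2)) (qconj d l * exp (- t/2))) y \<in> \<int>"
          unfolding y using pair_trace[of l m t] mK mM LK by auto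
      qed
    qed
  next
    show "cdual (Lambda d t L) \<subseteq> Lambda d t (tdual d L)"
    proof
      fix y assume yd: "y \<in> cdual (Lambda d t L)"
      define u where "u = e * Im y"
      define v where "v = e' * Re y"
      have pl: "cpair (Complex (l * exp (t/2)) (qconj d l * exp (- t/2))) y = l * u + qconj d l * v" for l
        unfolding cpair_def u_def v_def e_def e'_def by (simp add: algebra_simps)
      have inZ: "l \<in> L \<Longrightarrow> l * u + qconj d l * v \<in> \<int>" for l
        using yd unfolding cdual_def Lambda_def pl[symmetric] by blast
      obtain p where p: "a * u + qconj d a * v = of_int p" using inZ[OF aL] by (metis Ints_cases)
      obtain q where q: "b * u + qconj d b * v = of_int q" using inZ[OF bL] by (metis Ints_cases)
      define D where "D = a * qconj d b - qconj d a * b"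
      define m where "m = (a * of_int q - b * of_int p) / D"
      have mv: "m = v" unfolding m_def D_def using D0 p[symmetric] q[symmetric]
        by (simp add: field_simps)
      have DK: "D \<in> qfield d" and Dc: "qconj d D = qconj d a * b - a * qconj d b"
        unfolding D_def using K_sub K_mult K_conj aK bK by (auto simp: mult.commute)
      have NK: "a * of_int q - b * of_int p \<in> qfield d"
        and Nc: "qconj d (a * of_int q - b * of_int p) = qconj d a * of_int q - qconj d b * of_int p"
        using K_sub K_mult K_int aK bK by auto
      have mK: "m \<in> qfield d" and mc: "qconj d m = (qconj d a * of_int q - qconj d b * of_int p)
          / (qconj d a * b - a * qconj d b)"
        unfolding m_def using K_div[OF NK DK] Nc Dc by auto
      have mu: "qconj d m = u" unfolding mc using D0 p[symmetric] q[symmetric]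
        by (simp add: field_simps)
      have yeq: "y = Complex (m * exp (t/2)) (qconj d m * exp (- t/2))"
      proof -
        have 1: "m * e = Re y" using mv ee unfolding v_def by (metis mult.commute mult.left_neutral mult.assoc)
        have 2: "qconj d m * e' = Im y" using mu ee unfolding u_def by (metis mult.commute mult.left_neutral mult.assoc)
        show ?thesis using 1 2 unfolding e_def e'_def by (simp add: complex_eq_iff)
      qed
      have "m \<in> tdual d L"
        unfolding tdual_def
      proof (clarify, intro conjI mK ballI)
        fix l assume lL: "l \<in> L"
        have "qtrace d (qconj d l * m) = cpair (Complex (l * exp (t/2)) (qconj d l * exp (- t/2))) y"
          unfolding yeq using pair_trace[of l m t] mK LK lL by auto
        thus "qtrace d (qconj d l * m) \<in> \<int>" using yd lL unfolding cdual_def Lambda_def by auto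
      qed
      thus "y \<in> Lambda d t (tdual d L)" unfolding Lambda_def yeq by blast
    qed
  qed
qed

end
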